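(* Assume the setup in the context. Then $2\le K\le T$ always holds, and for every outcome with $T\le n-3$: (i) if $K\le T\le \frac{3K+2}{2}$, then $\displaystyle\sum_{i=T+1}^n v_i^2\le U_K(T)\,(1+|X_T|)^2$; (ii) if $\frac{3K+2}{2}\le T$, then $\displaystyle\sum_{i=T+1}^n v_i^2\le U_K\!\left(\tfrac{3K+2}{2}\right)(1+|X_T|)^2$, where $U_K(s):=\dfrac{(K+1)^2-s}{(2K+1)^2}$ for real $s$.
   Context: Let $n\ge4$ and let $v_1,\dots,v_n$ be real numbers with $\sum_{i=1}^n v_i^2\le1$ ordered so that $v_n\ge v_1\ge v_{n-1}\ge v_2\ge v_3\ge\cdots\ge v_{n-2}\ge0$. Let $\epsilon_1,\dots,\epsilon_n$ be independent Rademacher random variables ($\pm1$ with probability $\tfrac12$ each). For $t\in\{1,\dots,n-1\}$ put $X_t:=\sum_{i=1}^t v_i\epsilon_i$ and $Y_t:=\sum_{i=t+1}^n v_i\epsilon_i$, and for $t\in\{1,\dots,n\}$ put $M_t:=\sum_{i=1}^t v_i$. Define the random time $T:=\min\big(\{t\le n-1: |X_t|>1-v_{t+1}\}\cup\{n-1\}\big)$ and the deterministic index $K:=\min\big(\{t\le n-1: M_t>1-v_{t+1}\}\cup\{n-1\}\big)$. *)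

theory Defs
  imports Complex_Main
begin

text \<open>Vectors v_1..v_n and signs eps_1..eps_n are functions nat => real indexed from 1.
An outcome of the Rademacher variables is a sign vector eps with eps i in {-1,1}.\<close>

definition Xs :: "(nat \<Rightarrow> real) \<Rightarrow> (nat \<Rightarrow> real) \<Rightarrow> nat \<Rightarrow> real" where
  "Xs v eps t = (\<Sum>i=1..t. v i * eps i)"

definition Ys :: "nat \<Rightarrow> (nat \<Rightarrow> real) \<Rightarrow> (nat \<Rightarrow> real) \<Rightarrow> nat \<Rightarrow> real" where
  "Ys n v eps t = (\<Sum>i=t+1..n. v i * eps i)"

definition Ms :: "(nat \<Rightarrow> real) \<Rightarrow> nat \<Rightarrow> real" where
  "Ms v t = (\<Sum>i=1..t. v i)"

definition stopT :: "nat \<Rightarrow> (nat \<Rightarrow> real) \<Rightarrow> (nat \<Rightarrow> real) \<Rightarrow> nat" where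
  "stopT n v eps = Min ({t \<in> {1..n-1}. \<bar>Xs v eps t\<bar> > 1 - v (t+1)} \<union> {n-1})"

definition indexK :: "nat \<Rightarrow> (nat \<Rightarrow> real) \<Rightarrow> nat" where
  "indexK n v = Min ({t \<in> {1..n-1}. Ms v t > 1 - v (t+1)} \<union> {n-1})"

definition UK :: "nat \<Rightarrow> real \<Rightarrow> real" where
  "UK K s = ((real K + 1)^2 - s) / (2 * real K + 1)^2"

end

theory Submission
  imports Defs
begin


lemma polyA:
  fixes k a m :: real
  assumes k: "k \<ge> 1" and a0: "0 \<le> a" and a1: "(k+1)*a \<le> 1" and m0: "0 \<le> m" and m1: "m \<le> k/2"
  shows "1 - 1/(k+1) - m*a^2 \<le> (k*(k+1)-m)*(2-a)^2/(2*k+1)^2"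
proof -
  obtain c where c: "c = k+1" by blast
  obtain e where e: "e = 2*k+1" by blast
  have cp: "c > 0" "e > 0" using c e k by auto
  define d where "d = (1-c*a)/e"
  have hd: "e*d = 1 - c*a" unfolding d_def using cp by simp
  have h1: "e*(1+d) = c*(2-a)" using hd c e by (simp add: algebra_simps)
  define u where "u = c*a"
  have ue: "u = 1 - e*d" using hd u_def by simp
  have d0: "d \<ge> 0" unfolding d_def using a1 cp c by simp
  have u0: "u \<le> 1" "u \<ge> 0" using u_def a1 a0 c k by auto
  have "2*m*(1+d+u) \<le> k*(1+d+u)" using m1 d0 u0 by (intro mult_right_mono) auto
  also have "\<dots> \<le> k*(2+d)" using u0 k by (intro mult_left_mono) auto
  finally have br: "c*d*(k*(2+d)-2*m*(1+d+u)) \<ge> 0" using d0 cp by simp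
  have poly: "(k*c-m)*(1+d)^2 - (c^2 - c - m*u^2) = c*d*(k*(2+d)-2*m*(1+d+u))"
    unfolding ue c e by (simp add: algebra_simps power2_eq_square)
  have "(c^2 - c - m*u^2)/c^2 \<le> ((k*c-m)*(1+d)^2)/c^2"
    using br poly by (intro divide_right_mono) auto
  moreover have "(c^2 - c - m*u^2)/c^2 = 1 - 1/c - m*a^2"
    using cp unfolding u_def by (simp add: field_simps power2_eq_square)
  moreover have "(1+d)^2/c^2 = (2-a)^2/e^2"
  proof -
    have "(e*(1+d))^2 = (c*(2-a))^2" using h1 by simp
    thus ?thesis using cp by (simp add: frac_eq_eq power_mult_distrib mult.commute)
  qed
  ultimately have "1 - 1/c - m*a^2 \<le> (k*c-m)*(2-a)^2/e^2" by (metis times_divide_eq_right)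
  thus ?thesis using c e by simp
qed

lemma polyB:
  fixes k a m :: real
  assumes k: "k \<ge> 1" and a0: "a \<le> 2" and a1: "(k+1)*a \<ge> 1" and m0: "0 \<le> m"
  shows "1 - (k+1+m)*a^2 \<le> (k*(k+1)-m)*(2-a)^2/(2*k+1)^2"
proof -
  obtain c where c: "c = k+1" by blast
  obtain e where e: "e = 2*k+1" by blast
  have cp: "c > 0" "e > 0" using c e k by auto
  define d where "d = (1-c*a)/e"
  have hd: "e*d = 1 - c*a" unfolding d_def using cp by simp
  have h1: "e*(1+d) = c*(2-a)" using hd c e by (simp add: algebra_simps)
  define u where "u = c*a"
  have ue: "u = 1 - e*d" using hd u_def by simp
  have d0: "d \<le> 0" unfolding d_def using a1 cp c by (simp add: divide_nonpos_pos)
  have u0: "u \<ge> 1" using u_def a1 c by auto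
  have "1 + d + u \<ge> 0"
  proof -
    have "e*(1+d+u) = e + 1 - c*a + e*u" using hd by (simp add: algebra_simps)
    also have "\<dots> = e + 1 + (e - 1)*u" unfolding u_def by (simp add: algebra_simps)
    also have "\<dots> \<ge> 0" using cp u0 e k by simp
    finally show ?thesis using cp by (simp add: zero_le_mult_iff)
  qed
  hence "2*m*(1+d+u) \<ge> 0" using m0 by simp
  moreover have "k*(2+d) \<le> e*(u+1)"
  proof -
    have "k*(2+d) \<le> k*2" using d0 k by simp
    also have "\<dots> \<le> e*2" using e k by simp
    also have "\<dots> \<le> e*(u+1)" using u0 cp by (intro mult_left_mono) auto
    finally show ?thesis .
  qed
  ultimately have "k*(2+d)-2*m*(1+d+u)-e*(u+1) \<le> 0" by linarith
  hence br: "c*d*(k*(2+d)-2*m*(1+d+u)-e*(u+1)) \<ge> 0" using d0 cp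
    by (simp add: mult_nonpos_nonpos mult_nonneg_nonpos)
  have poly: "(k*c-m)*(1+d)^2 - (c^2 - (c+m)*u^2) = c*d*(k*(2+d)-2*m*(1+d+u)-e*(u+1))"
    unfolding ue c e by (simp add: algebra_simps power2_eq_square)
  have "(c^2 - (c+m)*u^2)/c^2 \<le> ((k*c-m)*(1+d)^2)/c^2"
    using br poly by (intro divide_right_mono) auto
  moreover have "(c^2 - (c+m)*u^2)/c^2 = 1 - (c+m)*a^2"
    using cp unfolding u_def by (simp add: field_simps power2_eq_square)
  moreover have "(1+d)^2/c^2 = (2-a)^2/e^2"
  proof -
    have "(e*(1+d))^2 = (c*(2-a))^2" using h1 by simp
    thus ?thesis using cp by (simp add: frac_eq_eq power_mult_distrib mult.commute)
  qed
  ultimately have "1 - (c+m)*a^2 \<le> (k*c-m)*(2-a)^2/e^2" by (metis times_divide_eq_right)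
  thus ?thesis using c e by simp
qed

lemma polyC:
  fixes k a :: real
  assumes k: "k \<ge> 1" and a0: "0 \<le> a" and a1: "(k+1)*a \<le> 1"
  shows "1 - (1-a)^2/k \<le> (k^2+k+1)*(2-a)^2/(2*k+1)^2"
proof -
  obtain c where c: "c = k+1" by blast
  obtain e where e: "e = 2*k+1" by blast
  have cp: "c > 0" "e > 0" "k > 0" using c e k by auto
  define d where "d = (1-c*a)/e"
  have hd: "e*d = 1 - c*a" unfolding d_def using cp by simp
  have h1: "e*(1+d) = c*(2-a)" using hd c e by (simp add: algebra_simps)
  define u where "u = c*a"
  have ue: "u = 1 - e*d" using hd u_def by simp
  have d0: "d \<ge> 0" unfolding d_def using a1 cp c by simp
  have br: "d*(2*k*c*(k+2) + d*(k*(k^2+k+1) + e^2)) \<ge> 0" using d0 cp by simp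
  have poly: "k*(k^2+k+1)*(1+d)^2 - (k*c^2 - (c-u)^2) = d*(2*k*c*(k+2) + d*(k*(k^2+k+1) + e^2))"
    unfolding ue c e by (simp add: algebra_simps power2_eq_square)
  have "(k*c^2 - (c-u)^2)/(k*c^2) \<le> (k*(k^2+k+1)*(1+d)^2)/(k*c^2)"
    using br poly cp by (intro divide_right_mono) auto
  moreover have "(k*c^2 - (c-u)^2)/(k*c^2) = 1 - (1-a)^2/k"
    using cp unfolding u_def by (simp add: field_simps power2_eq_square)
  moreover have "(k*(k^2+k+1)*(1+d)^2)/(k*c^2) = (k^2+k+1)*((1+d)^2/c^2)"
    using cp by (simp add: field_simps)
  moreover have "(1+d)^2/c^2 = (2-a)^2/e^2"
  proof -
    have "(e*(1+d))^2 = (c*(2-a))^2" using h1 by simp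
    thus ?thesis using cp by (simp add: frac_eq_eq power_mult_distrib mult.commute)
  qed
  ultimately have "1 - (1-a)^2/k \<le> (k^2+k+1)*(2-a)^2/e^2" by (metis times_divide_eq_right)
  thus ?thesis using c e by simp
qed

lemma polyD:
  fixes k a :: real
  assumes k: "k \<ge> 1" and a1: "(k+1)*a \<ge> 1"
  shows "1 - k*a^2 \<le> (k^2+k+1)*(2-a)^2/(2*k+1)^2"
proof -
  obtain c where c: "c = k+1" by blast
  obtain e where e: "e = 2*k+1" by blast
  have cp: "c > 0" "e > 0" "k > 0" using c e k by auto
  define d where "d = (1-c*a)/e"
  have hd: "e*d = 1 - c*a" unfolding d_def using cp by simp
  have h1: "e*(1+d) = c*(2-a)" using hd c e by (simp add: algebra_simps)
  define u where "u = c*a"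
  have ue: "u = 1 - e*d" using hd u_def by simp
  have d0: "d \<le> 0" unfolding d_def using a1 cp c by (simp add: divide_nonpos_pos)
  have "2 - 2*k^2 \<le> 0" using k mult_mono[of 1 k 1 k] by (simp add: power2_eq_square)
  hence "d*(2-2*k^2) \<ge> 0" using d0 by (simp add: mult_nonpos_nonpos)
  moreover have "d*(d*((k^2+k+1) + k*e^2)) \<ge> 0" using cp by (simp add: mult.assoc[symmetric])
  ultimately have br: "d*((2-2*k^2) + d*((k^2+k+1) + k*e^2)) \<ge> 0" by (simp add: distrib_left)
  have poly: "(k^2+k+1)*(1+d)^2 - (c^2 - k*u^2) = d*((2-2*k^2) + d*((k^2+k+1) + k*e^2))"
    unfolding ue c e by (simp add: algebra_simps power2_eq_square)
  have "(c^2 - k*u^2)/c^2 \<le> ((k^2+k+1)*(1+d)^2)/c^2"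
    using br poly by (intro divide_right_mono) auto
  moreover have "(c^2 - k*u^2)/c^2 = 1 - k*a^2"
    using cp unfolding u_def by (simp add: field_simps power2_eq_square)
  moreover have "(1+d)^2/c^2 = (2-a)^2/e^2"
  proof -
    have "(e*(1+d))^2 = (c*(2-a))^2" using h1 by simp
    thus ?thesis using cp by (simp add: frac_eq_eq power_mult_distrib mult.commute)
  qed
  ultimately have "1 - k*a^2 \<le> (k^2+k+1)*(2-a)^2/e^2" by (metis times_divide_eq_right)
  thus ?thesis using c e by simp
qed

lemma chain_le:
  fixes v :: "nat \<Rightarrow> real"
  assumes ord4: "\<forall>i. 2 \<le> i \<and> i < n - 2 \<longrightarrow> v (i+1) \<le> v i"
  shows "2 \<le> i \<Longrightarrow> i \<le> j \<Longrightarrow> j \<le> n-2 \<Longrightarrow> v j \<le> v i"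
proof -
  assume i2: "2 \<le> i" and ij: "i \<le> j" and jn: "j \<le> n-2"
  have "j \<le> n-2 \<longrightarrow> v j \<le> v i" using ij
  proof (induction j rule: dec_induct)
    case base thus ?case by simp
  next
    case (step m)
    show ?case
    proof
      assume "Suc m \<le> n-2"
      hence "v (m+1) \<le> v m" using ord4 step.hyps i2 by auto
      thus "v (Suc m) \<le> v i" using step \<open>Suc m \<le> n-2\<close> by simp
    qed
  qed
  thus ?thesis using jn by simp
qed

lemma tangent_sum:
  fixes f :: "nat \<Rightarrow> real"
  assumes "finite A"
  shows "2*t*(\<Sum>i\<in>A. f i) - real (card A) * t^2 \<le> (\<Sum>i\<in>A. (f i)^2)"
proof -
  have "\<And>i. 2*t*f i - t^2 \<le> (f i)^2"
  proof -
    fix i have "0 \<le> (f i - t)^2" by simp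
    thus "2*t*f i - t^2 \<le> (f i)^2" by (simp add: power2_eq_square algebra_simps)
  qed
  hence "(\<Sum>i\<in>A. 2*t*f i - t^2) \<le> (\<Sum>i\<in>A. (f i)^2)" by (intro sum_mono) auto
  thus ?thesis by (simp add: sum_subtractf sum_distrib_left)
qed

theorem mainTheorem6:
  fixes n :: nat and v eps :: "nat \<Rightarrow> real"
  assumes n4: "n \<ge> 4"
    and norm: "(\<Sum>i=1..n. (v i)^2) \<le> 1"
    and ord1: "v 1 \<le> v n" and ord2: "v (n-1) \<le> v 1" and ord3: "v 2 \<le> v (n-1)"
    and ord4: "\<forall>i. 2 \<le> i \<and> i < n - 2 \<longrightarrow> v (i+1) \<le> v i"
    and ord5: "v (n-2) \<ge> 0"
    and eps: "\<forall>i\<in>{1..n}. eps i = 1 \<or> eps i = -1"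
  shows "2 \<le> indexK n v \<and> indexK n v \<le> stopT n v eps \<and>
    (stopT n v eps \<le> n - 3 \<longrightarrow>
      ((real (stopT n v eps) \<le> (3 * real (indexK n v) + 2) / 2 \<longrightarrow>
          (\<Sum>i=stopT n v eps + 1..n. (v i)^2)
            \<le> UK (indexK n v) (real (stopT n v eps)) * (1 + \<bar>Xs v eps (stopT n v eps)\<bar>)^2) \<and>
       ((3 * real (indexK n v) + 2) / 2 \<le> real (stopT n v eps) \<longrightarrow>
          (\<Sum>i=stopT n v eps + 1..n. (v i)^2)
            \<le> UK (indexK n v) ((3 * real (indexK n v) + 2) / 2) * (1 + \<bar>Xs v eps (stopT n v eps)\<bar>)^2)))"
proof -
  define K where "K = indexK n v"
  define T where "T = stopT n v eps"
  define SK where "SK = {t \<in> {1..n-1}. Ms v t > 1 - v (t+1)} \<union> {n-1}"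
  define ST where "ST = {t \<in> {1..n-1}. \<bar>Xs v eps t\<bar> > 1 - v (t+1)} \<union> {n-1}"
  have Kdef: "K = Min SK" unfolding K_def SK_def indexK_def by simp
  have Tdef: "T = Min ST" unfolding T_def ST_def stopT_def by simp
  have finSK: "finite SK" unfolding SK_def by simp
  have finST: "finite ST" unfolding ST_def by simp
  have neSK: "SK \<noteq> {}" unfolding SK_def by simp
  have neST: "ST \<noteq> {}" unfolding ST_def by simp
  have KinSK: "K \<in> SK" using Min_in[OF finSK neSK] Kdef by simp
  have TinST: "T \<in> ST" using Min_in[OF finST neST] Tdef by simp
  have Kle: "\<And>t. t \<in> SK \<Longrightarrow> K \<le> t" using Min_le[OF finSK] Kdef by simp
  have SK1: "\<And>t. t \<in> SK \<Longrightarrow> 1 \<le> t \<and> t \<le> n-1" using n4 unfolding SK_def by auto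
  have ch: "\<And>i j. 2 \<le> i \<Longrightarrow> i \<le> j \<Longrightarrow> j \<le> n-2 \<Longrightarrow> v j \<le> v i"
    using chain_le[OF ord4] by blast
  have v2: "v 2 \<ge> 0" using ch[of 2 "n-2"] n4 ord5 by (simp add: le_diff_conv2)
  have vnn: "\<And>i. i \<in> {1..n} \<Longrightarrow> v i \<ge> 0"
  proof -
    fix i assume i: "i \<in> {1..n}"
    show "v i \<ge> 0"
    proof (cases "2 \<le> i \<and> i \<le> n-2")
      case True thus ?thesis using ch[of i "n-2"] ord5 by simp
    next
      case False
      hence "i = 1 \<or> i = n-1 \<or> i = n" using i by auto
      thus ?thesis using v2 ord1 ord2 ord3 by auto
    qed
  qed
  have vge: "\<And>i j. 1 \<le> i \<Longrightarrow> i \<le> j \<Longrightarrow> 2 \<le> j \<Longrightarrow> j \<le> n-2 \<Longrightarrow> v j \<le> v i"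
  proof -
    fix i j :: nat assume h: "1 \<le> i" "i \<le> j" "2 \<le> j" "j \<le> n-2"
    show "v j \<le> v i"
    proof (cases "i = 1")
      case True
      have "v j \<le> v 2" using ch[of 2 j] h by simp
      thus ?thesis using True ord2 ord3 by simp
    next
      case False thus ?thesis using ch[of i j] h by simp
    qed
  qed
  have K1: "1 \<le> K" using SK1 KinSK by blast
  have K2: "2 \<le> K"
  proof (rule ccontr)
    assume "\<not> 2 \<le> K" hence "K = 1" using K1 by simp
    hence "1 \<in> SK" using KinSK by simp
    moreover have "1 \<noteq> n-1" using n4 by simp
    ultimately have "Ms v 1 > 1 - v 2" unfolding SK_def by (auto simp: numeral_2_eq_2)
    hence s12: "v 1 + v 2 > 1" by (simp add: Ms_def)
    have sub: "{1,2,n-1,n} \<subseteq> {1..n}" using n4 by auto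
    have "(\<Sum>i\<in>{1,2,n-1,n}. (v i)^2) \<le> (\<Sum>i=1..n. (v i)^2)"
      using sub by (intro sum_mono2) auto
    moreover have "(\<Sum>i\<in>{1,2,n-1,n}. (v i)^2) = (v 1)^2 + (v 2)^2 + (v (n-1))^2 + (v n)^2"
      using n4 by simp
    moreover have "(v 1)^2 \<le> (v n)^2" using ord1 vnn[of 1] n4 by (intro power_mono) auto
    moreover have "(v 2)^2 \<le> (v (n-1))^2" using ord3 v2 by (intro power_mono) auto
    ultimately have q: "2*((v 1)^2 + (v 2)^2) \<le> 1" using norm by (smt (verit))
    have "(v 1 + v 2)^2 \<le> 2*((v 1)^2 + (v 2)^2)"
    proof -
      have "0 \<le> (v 1 - v 2)^2" by simp
      thus ?thesis by (simp add: power2_eq_square algebra_simps)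
    qed
    moreover have "1 < (v 1 + v 2)^2" using s12 by (simp add: power2_eq_square less_1_mult)
    ultimately show False using q by linarith
  qed
  have XM: "\<And>t. t \<le> n \<Longrightarrow> \<bar>Xs v eps t\<bar> \<le> Ms v t"
  proof -
    fix t assume tn: "t \<le> n"
    have "\<bar>Xs v eps t\<bar> \<le> (\<Sum>i=1..t. \<bar>v i * eps i\<bar>)" unfolding Xs_def by (rule sum_abs)
    also have "\<dots> = Ms v t" unfolding Ms_def
    proof (intro sum.cong refl)
      fix i assume "i \<in> {1..t}"
      hence "i \<in> {1..n}" using tn by auto
      hence "v i \<ge> 0" "eps i = 1 \<or> eps i = -1" using vnn eps by auto
      thus "\<bar>v i * eps i\<bar> = v i" by (auto simp: abs_mult)
    qed
    finally show "\<bar>Xs v eps t\<bar> \<le> Ms v t" .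
  qed
  have KT: "K \<le> T"
  proof (cases "T = n-1")
    case True thus ?thesis using Kle unfolding SK_def by auto
  next
    case False
    hence A: "T \<in> {1..n-1}" and B: "\<bar>Xs v eps T\<bar> > 1 - v (T+1)" using TinST unfolding ST_def by auto
    have "T \<le> n" using A by auto
    hence "Ms v T > 1 - v (T+1)" using XM[of T] B by linarith
    hence "T \<in> SK" using A unfolding SK_def by auto
    thus ?thesis using Kle by blast
  qed
  have main: "T \<le> n - 3 \<longrightarrow>
      ((real T \<le> (3 * real K + 2) / 2 \<longrightarrow>
          (\<Sum>i=T + 1..n. (v i)^2) \<le> UK K (real T) * (1 + \<bar>Xs v eps T\<bar>)^2) \<and>
       ((3 * real K + 2) / 2 \<le> real T \<longrightarrow>
          (\<Sum>i=T + 1..n. (v i)^2) \<le> UK K ((3 * real K + 2) / 2) * (1 + \<bar>Xs v eps T\<bar>)^2))"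
  proof
    assume T3: "T \<le> n - 3"
    have Tn: "T \<noteq> n-1" using T3 n4 by simp
    hence Tin: "1 \<le> T" "T \<le> n-1" and Xbig: "\<bar>Xs v eps T\<bar> > 1 - v (T+1)"
      using TinST unfolding ST_def by auto
    have "K \<noteq> n-1" using KT T3 n4 by simp
    hence KSK: "Ms v K > 1 - v (K+1)" using KinSK unfolding SK_def by auto
    have Km1: "\<not> (Ms v (K-1) > 1 - v (K-1+1))"
    proof
      assume "Ms v (K-1) > 1 - v (K-1+1)"
      hence "K-1 \<in> SK" using K2 KT T3 unfolding SK_def by auto
      hence "K \<le> K-1" using Kle by blast
      thus False using K2 by simp
    qed
    have MsSuc: "\<And>t. Ms v (Suc t) = Ms v t + v (Suc t)" unfolding Ms_def by simp
    have MK1: "Ms v K \<le> 1"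
    proof -
      have "K = Suc (K-1)" using K2 by simp
      hence "Ms v K = Ms v (K-1) + v K" using MsSuc by metis
      thus ?thesis using Km1 K2 by simp
    qed
    define a where "a = v (T+1)"
    have a0: "a \<ge> 0" unfolding a_def using vnn T3 n4 by simp
    have vgea: "\<And>i. i \<in> {1..T} \<Longrightarrow> a \<le> v i"
      unfolding a_def using vge K2 KT T3 n4 by auto
    define k where "k = real K"
    have k2: "k \<ge> 2" unfolding k_def using K2 by simp
    have Ka: "k*a \<le> 1"
    proof -
      have "(\<Sum>i=1..K. a) \<le> (\<Sum>i=1..K. v i)" using vgea KT by (intro sum_mono) auto
      thus ?thesis using MK1 unfolding Ms_def k_def by simp
    qed
    have a_le: "a \<le> 1/2" using Ka mult_right_mono[OF k2 a0] by linarith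
    define x where "x = \<bar>Xs v eps T\<bar>"
    have x1: "2 - a \<le> 1 + x" using Xbig unfolding x_def a_def by simp
    have xsq: "(2-a)^2 \<le> (1+x)^2" using x1 a_le by (intro power_mono) auto
    define H where "H = (\<Sum>i=1..T. (v i)^2)"
    define S where "S = (\<Sum>i=T+1..n. (v i)^2)"
    have HS: "H + S \<le> 1"
    proof -
      have "{1..n} = {1..T} \<union> {T+1..n}" using Tin n4 by auto
      hence "(\<Sum>i=1..n. (v i)^2) = H + S" unfolding H_def S_def
        by (simp add: sum.union_disjoint ivl_disj_int_two)
      thus ?thesis using norm by simp
    qed
    have Hga: "real T * a^2 \<le> H"
    proof -
      have "(\<Sum>i=1..T. a^2) \<le> H" unfolding H_def using vgea a0 by (intro sum_mono power_mono) auto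
      thus ?thesis by simp
    qed
    have den: "(2*k+1)^2 > 0" using k2 by simp
    have UKe: "\<And>s. UK K s = ((k+1)^2 - s)/(2*k+1)^2" unfolding UK_def k_def by simp
    show "(real T \<le> (3 * real K + 2) / 2 \<longrightarrow>
          (\<Sum>i=T + 1..n. (v i)^2) \<le> UK K (real T) * (1 + \<bar>Xs v eps T\<bar>)^2) \<and>
       ((3 * real K + 2) / 2 \<le> real T \<longrightarrow>
          (\<Sum>i=T + 1..n. (v i)^2) \<le> UK K ((3 * real K + 2) / 2) * (1 + \<bar>Xs v eps T\<bar>)^2)"
    proof (cases "T = K")
      case True
      have MgtK: "Ms v K > 1 - a" using KSK True unfolding a_def by simp
      have t0: "(1-a)/k \<ge> 0" using a_le k2 by simp
      have "2*((1-a)/k)*(\<Sum>i\<in>{1..K}. v i) - real (card {1..K}) * ((1-a)/k)^2 \<le> (\<Sum>i\<in>{1..K}. (v i)^2)"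
        by (rule tangent_sum) simp
      hence "2*((1-a)/k)*Ms v K - k * ((1-a)/k)^2 \<le> H" unfolding H_def Ms_def k_def True by simp
      moreover have "2*((1-a)/k)*(1-a) \<le> 2*((1-a)/k)*Ms v K" using t0 MgtK by (intro mult_left_mono) (auto simp del: times_divide_eq_right)
      moreover have "2*((1-a)/k)*(1-a) - k * ((1-a)/k)^2 = (1-a)^2/k" using k2 by (simp add: field_simps power2_eq_square)
      ultimately have H1: "(1-a)^2/k \<le> H" by linarith
      have H2: "k*a^2 \<le> H" using Hga True unfolding k_def by simp
      have U: "UK K (real T) = (k^2+k+1)/(2*k+1)^2" unfolding UKe True k_def[symmetric]
        by (simp add: power2_eq_square algebra_simps)
      have "1 - H \<le> (k^2+k+1)*(2-a)^2/(2*k+1)^2"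
      proof (cases "(k+1)*a \<le> 1")
        case True thus ?thesis using polyC[of k a] H1 k2 a0 by linarith
      next
        case False thus ?thesis using polyD[of k a] H2 k2 by linarith
      qed
      also have "\<dots> \<le> (k^2+k+1)*(1+x)^2/(2*k+1)^2"
        using xsq den k2 by (intro divide_right_mono mult_left_mono) auto
      finally have "S \<le> UK K (real T) * (1+x)^2" using HS U by simp
      moreover have "\<not> (3 * real K + 2) / 2 \<le> real T" using True by simp
      ultimately show ?thesis unfolding S_def x_def by simp
    next
      case False
      hence KT1: "K+1 \<le> T" using KT by simp
      define p where "p = Ms v (K+1)"
      have p1: "p > 1" using KSK MsSuc[of K] unfolding p_def by simp
      define H1 where "H1 = (\<Sum>i=1..K+1. (v i)^2)"
      define H2 where "H2 = (\<Sum>i=K+2..T. (v i)^2)"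
      have Hsplit: "H = H1 + H2"
      proof -
        have "{1..T} = {1..K+1} \<union> {K+2..T}" using KT1 by auto
        thus ?thesis unfolding H_def H1_def H2_def by (simp add: sum.union_disjoint ivl_disj_int_two)
      qed
      have "2*(1/(k+1))*(\<Sum>i\<in>{1..K+1}. v i) - real (card {1..K+1}) * (1/(k+1))^2 \<le> (\<Sum>i\<in>{1..K+1}. (v i)^2)"
        by (rule tangent_sum) simp
      hence "2*(1/(k+1))*p - (k+1) * (1/(k+1))^2 \<le> H1" unfolding H1_def p_def Ms_def k_def by (simp add: add.commute)
      moreover have "2*(1/(k+1))*p - (k+1) * (1/(k+1))^2 = (2*p-1)/(k+1)"
      proof -
        have "(k+1)*(1/(k+1))^2 = 1/(k+1)" using k2 by (simp add: power2_eq_square)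
        moreover have "2*(1/(k+1))*p - 1/(k+1) = (2*p-1)/(k+1)" by (simp add: diff_divide_distrib)
        ultimately show ?thesis by simp
      qed
      moreover have "1/(k+1) \<le> (2*p-1)/(k+1)" using p1 k2 by (intro divide_right_mono) auto
      ultimately have H1b: "1/(k+1) \<le> H1" by linarith
      define m where "m = real T - k - 1"
      have m0: "m \<ge> 0" unfolding m_def k_def using KT1 by simp
      have H2b: "m * a^2 \<le> H2"
      proof -
        have "(\<Sum>i=K+2..T. a^2) \<le> H2" unfolding H2_def using vgea a0 by (intro sum_mono power_mono) auto
        moreover have "real (card {K+2..T}) = m" unfolding m_def k_def using KT1 by simp
        ultimately show ?thesis by simp
      qed
      have Hb1: "1/(k+1) + m*a^2 \<le> H" using H1b H2b Hsplit by simp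
      have Hb2: "(k+1+m)*a^2 \<le> H" using Hga unfolding m_def by simp
      have gen: "S \<le> (k*(k+1)-m')/(2*k+1)^2 * (1+x)^2" if m'0: "0 \<le> m'" and m'1: "m' \<le> k/2" and m'm: "m' \<le> m" for m'
      proof -
        have mm: "m'*a^2 \<le> m*a^2" using m'm by (intro mult_right_mono) auto
        have "1 - H \<le> (k*(k+1)-m')*(2-a)^2/(2*k+1)^2"
        proof (cases "(k+1)*a \<le> 1")
          case True thus ?thesis using polyA[of k a m'] Hb1 mm k2 a0 m'0 m'1 by linarith
        next
          case False thus ?thesis using polyB[of k a m'] Hb2 mm k2 a_le m'0 by (simp add: algebra_simps)
        qed
        also have "\<dots> \<le> (k*(k+1)-m')*(1+x)^2/(2*k+1)^2"
        proof -
          have "k*(k+1) - m' \<ge> 0" proof - have "k*1 \<le> k*(k+1)" using k2 by (intro mult_left_mono) auto thus ?thesis using m'1 k2 by linarith qed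
          thus ?thesis using xsq den by (intro divide_right_mono mult_left_mono) auto
        qed
        finally show ?thesis using HS by simp
      qed
      have c1: "real T \<le> (3 * real K + 2) / 2 \<longrightarrow> S \<le> UK K (real T) * (1+x)^2"
      proof
        assume "real T \<le> (3 * real K + 2) / 2"
        hence "m \<le> k/2" unfolding m_def k_def by simp
        hence "S \<le> (k*(k+1)-m)/(2*k+1)^2 * (1+x)^2" using gen m0 by simp
        moreover have "UK K (real T) = (k*(k+1)-m)/(2*k+1)^2" unfolding UKe m_def
          by (simp add: power2_eq_square algebra_simps)
        ultimately show "S \<le> UK K (real T) * (1+x)^2" by simp
      qed
      have c2: "(3 * real K + 2) / 2 \<le> real T \<longrightarrow> S \<le> UK K ((3 * real K + 2) / 2) * (1+x)^2"
      proof
        assume "(3 * real K + 2) / 2 \<le> real T"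
        hence "k/2 \<le> m" unfolding m_def k_def by simp
        hence "S \<le> (k*(k+1)-k/2)/(2*k+1)^2 * (1+x)^2" using gen[of "k/2"] k2 by simp
        moreover have "UK K ((3 * real K + 2) / 2) = (k*(k+1)-k/2)/(2*k+1)^2"
        proof -
          have "(k+1)^2 - (3*k+2)/2 = k*(k+1)-k/2" by (simp add: power2_eq_square field_simps)
          thus ?thesis unfolding UKe k_def[symmetric] by simp
        qed
        ultimately show "S \<le> UK K ((3 * real K + 2) / 2) * (1+x)^2" by simp
      qed
      show ?thesis using c1 c2 unfolding S_def x_def by simp
    qed
  qed
  show ?thesis using K2 KT main unfolding K_def[symmetric] T_def[symmetric] by blast
qed

end
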